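(* Let $x=(x_1,\dots,x_{|x|})$ and $y=(y_1,\dots,y_{|y|})$ be two finite sequences of strings and let $\lambda\ge 0$. Then the minimum of $\mathrm{error}_\lambda(T)$ over all labeled summary trees $T$ of $\{x,y\}$ equals $\mathsf{EDG}(x,y,\lambda)$, and the tree $T^\ast=\textsc{BuildBifurcation}(x,y,\lambda)$ is an optimal summary tree for $\{x,y\}$ with node cost $\lambda$, with $\mathrm{error}_\lambda(T^\ast)=\mathsf{EDG}(x,y,\lambda)$.
   Context: Strings are over a finite alphabet; $\varepsilon$ is the empty string and $\mathsf{ED}$ is the classical Levenshtein edit distance between strings (unit cost for character insertion, deletion and substitution). A string sequence is a finite list of strings. Asymmetric edit distance: for string sequences $x,y$, $\mathsf{AED}(x,y)$ is the minimum cost of transforming $x$ into $y$ using only the operations (i) inserting a string $w$ into $x$, costing $\mathsf{ED}(w,\varepsilon)$, and (ii) substituting a string $w$ of $x$ by $w'$, costing $\mathsf{ED}(w,w')$; no string of $x$ may be deleted (so $\mathsf{AED}(x,y)$ is defined only when $|x|\le|y|$). Labeled summary tree of a set $X$ of string sequences: a rooted tree $T$ whose root is a special sentinel node and whose other nodes are each labeled by a string, together with a map $f$ assigning to each $x\in X$ a node $v_x$ of $T$. $L_T(v)$ denotes the sequence of labels on the path from the root (excluding the sentinel) to $v$; $|T|$ is the number of non-sentinel nodes. For $\lambda\ge0$, $\mathrm{error}_\lambda(T)=\sum_{x\in X}\mathsf{AED}(x,L_T(v_x))+\lambda|T|$, where the tree must satisfy $|x|\le|L_T(v_x)|$ for every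 $x$ (so that each $\mathsf{AED}$ is defined). An optimal summary tree minimizes $\mathrm{error}_\lambda$. Edit distance with give-up: for sequences $x,y$ (1-indexed), define $\mathsf{EDG}(i,j,\lambda)$ for $1\le i\le|x|+1$, $1\le j\le|y|+1$ by $\mathsf{EDG}(|x|+1,|y|+1,\lambda)=0$, $\mathsf{EDG}(i,|y|+1,\lambda)=\lambda(|x|-i+1)$, $\mathsf{EDG}(|x|+1,j,\lambda)=\lambda(|y|-j+1)$, and otherwise $\mathsf{EDG}(i,j,\lambda)$ is the minimum of: $\mathsf{EDG}(i+1,j+1,\lambda)+\lambda+\mathsf{ED}(x_i,y_j)$ (substitution); $\mathsf{EDG}(i,j+1,\lambda)+\lambda+\mathsf{ED}(\varepsilon,y_j)$ (insertion); $\mathsf{EDG}(i+1,j,\lambda)+\lambda+\mathsf{ED}(x_i,\varepsilon)$ (deletion); $\lambda(|x|-i+1)+\lambda(|y|-j+1)$ (give up). Set $\mathsf{EDG}(x,y,\lambda)=\mathsf{EDG}(1,1,\lambda)$. $\textsc{BuildBifurcation}(x,y,\lambda)$ is the tree built recursively along an optimal choice in this recurrence: if both sequences are empty, the empty tree (just the sentinel); if the chosen option is insertion of $y_1$ (or $x$ is empty), a root-child node labeled $y_1$ with subtree $\textsc{BuildBifurcation}(x,y_{2..|y|},\lambda)$ below it; if deletion of $x_1$ (or $y$ is empty), a node labeled $x_1$ with subtree $\textsc{BuildBifurcation}(x_{2..|x|},y,\lambda)$; if substitution, a node labeled $x_1$ with subtree $\textsc{BuildBifurcation}(x_{2..|x|},y_{2..|y|},\lambda)$;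 if give up, two disjoint paths below the current root, labeled successively by the remaining strings of $x$ and of $y$ respectively. Whenever the node corresponding to the last string $x_{|x|}$ (resp. $y_{|y|}$) is placed, $x$ (resp. $y$) is mapped to that node. *)

theory Defs
  imports Main "HOL.Real"
begin

fun ed :: "'a list \<Rightarrow> 'a list \<Rightarrow> nat" where
  "ed [] ys = length ys"
| "ed xs [] = length xs"
| "ed (a # xs) (b # ys) =
     min (min (ed xs ys + (if a = b then 0 else 1)) (ed xs (b # ys) + 1)) (ed (a # xs) ys + 1)"

inductive aed_reach :: "'a list list \<Rightarrow> 'a list list \<Rightarrow> nat \<Rightarrow> bool" where
  refl: "aed_reach x x 0"
| ins: "aed_reach x z c \<Longrightarrow> i \<le> length z \<Longrightarrow>
          aed_reach x (take i z @ w # drop i z) (c + ed w [])"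
| subst: "aed_reach x z c \<Longrightarrow> i < length z \<Longrightarrow>
          aed_reach x (z[i := w]) (c + ed (z ! i) w)"

definition aed :: "'a list list \<Rightarrow> 'a list list \<Rightarrow> nat" where
  "aed x y = (LEAST c. aed_reach x y c)"

text \<open>A tree is encoded by a list ns of its non-sentinel nodes: node number k+1 (k < length ns)
  has parent fst (ns ! k) and label snd (ns ! k); node 0 is the sentinel root. Validity requires
  every node's parent to have a smaller number, which makes it a rooted tree at the sentinel;
  every finite rooted tree admits such a numbering.\<close>

definition valid_tree :: "(nat \<times> 'a list) list \<Rightarrow> bool" where
  "valid_tree ns \<longleftrightarrow> (\<forall>k < length ns. fst (ns ! k) \<le> k)"

text \<open>tree_path ns v = L_T(v): labels on the path from the root (sentinel excluded) to v.\<close>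

function tree_path :: "(nat \<times> 'a list) list \<Rightarrow> nat \<Rightarrow> 'a list list" where
  "tree_path ns v =
     (if v = 0 \<or> length ns < v \<or> v \<le> fst (ns ! (v - 1)) then []
      else tree_path ns (fst (ns ! (v - 1))) @ [snd (ns ! (v - 1))])"
  by pat_completeness auto
termination by (relation "measure (\<lambda>(ns, v). v)") auto

text \<open>A labeled summary tree of {x, y}: a valid tree together with the assigned nodes vx, vy
  (nodes of T, the sentinel 0 included), such that the AED terms are defined.\<close>

definition summary_tree ::
  "'a list list \<Rightarrow> 'a list list \<Rightarrow> (nat \<times> 'a list) list \<Rightarrow> nat \<Rightarrow> nat \<Rightarrow> bool" where
  "summary_tree x y ns vx vy \<longleftrightarrow>
     valid_tree ns \<and> vx \<le> length ns \<and> vy \<le> length ns \<and>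
     length x \<le> length (tree_path ns vx) \<and> length y \<le> length (tree_path ns vy)"

definition error ::
  "real \<Rightarrow> 'a list list \<Rightarrow> 'a list list \<Rightarrow> (nat \<times> 'a list) list \<Rightarrow> nat \<Rightarrow> nat \<Rightarrow> real" where
  "error lam x y ns vx vy =
     real (aed x (tree_path ns vx)) + real (aed y (tree_path ns vy)) + lam * real (length ns)"

text \<open>edg lam xs ys = EDG(i, j, lam) where xs, ys are the suffixes x_{i..}, y_{j..}.\<close>

fun edg :: "real \<Rightarrow> 'a list list \<Rightarrow> 'a list list \<Rightarrow> real" where
  "edg lam [] [] = 0"
| "edg lam xs [] = lam * real (length xs)"
| "edg lam [] ys = lam * real (length ys)"
| "edg lam (a # xs) (b # ys) =
     min (min (edg lam xs ys + lam + real (ed a b))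
              (edg lam (a # xs) ys + lam + real (ed [] b)))
         (min (edg lam xs (b # ys) + lam + real (ed a []))
              (lam * real (length (a # xs)) + lam * real (length (b # ys))))"

text \<open>Placing a new node labeled s below the current root, with a subtree ns below it:
  all node numbers of the subtree are shifted by one (its sentinel becomes the new node 1).\<close>

definition shift_under :: "'a list \<Rightarrow> (nat \<times> 'a list) list \<Rightarrow> (nat \<times> 'a list) list" where
  "shift_under s ns = (0, s) # map (\<lambda>(p, l). (p + 1, l)) ns"

text \<open>A path below the node with number r, labeled successively by the strings of ws,
  occupying node numbers off+1, ..., off+length ws.\<close>

definition chain :: "nat \<Rightarrow> nat \<Rightarrow> 'a list list \<Rightarrow> (nat \<times> 'a list) list" where
  "chain r off ws = map (\<lambda>i. (if i = 0 then r else off + i, ws ! i)) [0..<length ws]"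

text \<open>bb lam xs ys ns vx vy: (ns, vx, vy) is a possible output of BuildBifurcation(xs, ys, lam)
  for SOME optimal choice at each step of the recurrence (ties broken arbitrarily). vx (vy) is the
  node to which xs (ys) is mapped; if xs is empty at the current call, it was mapped to the
  current root, i.e. node 0 of the current subtree.\<close>

inductive bb :: "real \<Rightarrow> 'a list list \<Rightarrow> 'a list list \<Rightarrow> (nat \<times> 'a list) list \<Rightarrow> nat \<Rightarrow> nat \<Rightarrow> bool"
  for lam :: real where
  empty: "bb lam [] [] [] 0 0"
| insertion: "bb lam xs ys ns vx vy \<Longrightarrow>
     (xs = [] \<or> (xs \<noteq> [] \<and> edg lam xs (b # ys) = edg lam xs ys + lam + real (ed [] b))) \<Longrightarrow>
     bb lam xs (b # ys) (shift_under b ns) (if xs = [] then 0 else vx + 1) (vy + 1)"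
| deletion: "bb lam xs ys ns vx vy \<Longrightarrow>
     (ys = [] \<or> (ys \<noteq> [] \<and> edg lam (a # xs) ys = edg lam xs ys + lam + real (ed a []))) \<Longrightarrow>
     bb lam (a # xs) ys (shift_under a ns) (vx + 1) (if ys = [] then 0 else vy + 1)"
| substitution: "bb lam xs ys ns vx vy \<Longrightarrow>
     edg lam (a # xs) (b # ys) = edg lam xs ys + lam + real (ed a b) \<Longrightarrow>
     bb lam (a # xs) (b # ys) (shift_under a ns) (vx + 1) (vy + 1)"
| giveup: "xs \<noteq> [] \<Longrightarrow> ys \<noteq> [] \<Longrightarrow>
     edg lam xs ys = lam * real (length xs) + lam * real (length ys) \<Longrightarrow>
     bb lam xs ys (chain 0 0 xs @ chain 0 (length xs) ys) (length xs) (length xs + length ys)"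

end

theory Submission
  imports Defs "HOL-Library.Sublist"
begin


lemma ed_Nil2[simp]: "ed xs [] = length xs"
  by (cases xs) auto

lemma ed_refl[simp]: "ed xs xs = 0"
  by (induction xs) auto

lemma ed_sym: "ed xs ys = ed ys xs"
  by (induction xs ys rule: ed.induct) (auto simp: min_def)

lemma ed_len1: "length ys \<le> length xs + ed xs ys"
  by (induction xs ys rule: ed.induct) (auto simp: min_def)

lemma ed_len2: "length xs \<le> length ys + ed xs ys"
  by (metis ed_len1 ed_sym)

lemma ed_upper: "ed xs ys \<le> length xs + length ys"
  by (induction xs ys rule: ed.induct) (auto simp: min_def)

lemma ed_tri: "ed a c \<le> ed a b + ed b c"
proof (induction "length a + length b + length c" arbitrary: a b c rule: less_induct)
  case less
  show ?case
  proof (cases "a = [] \<or> b = [] \<or> c = []")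
    case True
    moreover have "a = [] \<Longrightarrow> ?thesis" using ed_len1[where xs=b and ys=c] by simp
    moreover have "b = [] \<Longrightarrow> ?thesis" using ed_upper[of a c] by simp
    moreover have "c = [] \<Longrightarrow> ?thesis" using ed_len2[of a b] by simp
    ultimately show ?thesis by blast
  next
    case False
    then obtain a1 a' b1 b' c1 c' where eqs: "a = a1 # a'" "b = b1 # b'" "c = c1 # c'"
      by (meson list.exhaust)
    have i1: "ed a' c' \<le> ed a' b' + ed b' c'" by (rule less) (simp add: eqs)
    have i2: "ed a' c \<le> ed a' b + ed b c" by (rule less) (simp add: eqs)
    have i3: "ed a c' \<le> ed a b + ed b c'" by (rule less) (simp add: eqs)
    have i4: "ed a c' \<le> ed a b' + ed b' c'" by (rule less) (simp add: eqs)
    have i5: "ed a c \<le> ed a b' + ed b' c" by (rule less) (simp add: eqs)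
    have i6: "ed a' c \<le> ed a' b' + ed b' c" by (rule less) (simp add: eqs)
    define d where "d = (\<lambda>x y::'a. if x = y then 0 else (1::nat))"
    have i0: "d a1 c1 \<le> d a1 b1 + d b1 c1" by (auto simp: d_def)
    have u: "ed a c \<le> ed a' c' + d a1 c1" "ed a c \<le> ed a' c + 1" "ed a c \<le> ed a c' + 1"
      unfolding eqs d_def by auto
    have ab: "ed a b = ed a' b' + d a1 b1 \<or> ed a b = ed a' b + 1 \<or> ed a b = ed a b' + 1"
      unfolding eqs d_def by (simp add: min_def)
    have bc: "ed b c = ed b' c' + d b1 c1 \<or> ed b c = ed b' c + 1 \<or> ed b c = ed b c' + 1"
      unfolding eqs d_def by (simp add: min_def)
    show ?thesis using ab bc i0 i1 i2 i3 i4 i5 i6 u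
      by (elim disjE) linarith+
  qed
qed

inductive align :: "'a list list \<Rightarrow> 'a list list \<Rightarrow> nat \<Rightarrow> bool" where
  a_nil: "align [] [] 0"
| a_ins: "align x z c \<Longrightarrow> align x (w # z) (c + length w)"
| a_match: "align x z c \<Longrightarrow> align (a # x) (w # z) (c + ed a w)"

lemma a_ins': "align x z c \<Longrightarrow> d = c + length w \<Longrightarrow> align x (w # z) d"
  using a_ins by blast
lemma a_match': "align x z c \<Longrightarrow> d = c + ed a w \<Longrightarrow> align (a # x) (w # z) d"
  using a_match by blast

inductive_cases align_ConsE: "align x (w # z) c"

lemma align_len: "align x z c \<Longrightarrow> length x \<le> length z"
  by (induction rule: align.induct) auto

lemma align_refl: "align x x 0"
  by (induction x) (auto intro: a_nil a_match')

lemma align_exists: "length x \<le> length z \<Longrightarrow> \<exists>c. align x z c"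
proof (induction z arbitrary: x)
  case Nil then show ?case by (auto intro: a_nil)
next
  case (Cons w z)
  show ?case
  proof (cases "length x \<le> length z")
    case True then show ?thesis using Cons a_ins by blast
  next
    case False
    then obtain a x' where "x = a # x'" "length x' \<le> length z" using Cons.prems
      by (cases x) auto
    then show ?thesis using Cons.IH a_match by blast
  qed
qed

lemma align_ins_at: "align x z c \<Longrightarrow> i \<le> length z \<Longrightarrow>
    align x (take i z @ w # drop i z) (c + length w)"
proof (induction arbitrary: i rule: align.induct)
  case a_nil then show ?case using a_ins[OF align.a_nil] by simp
next
  case (a_ins x z c w')
  show ?case
  proof (cases i)
    case 0 then show ?thesis using align.a_ins[OF align.a_ins[OF a_ins.hyps]] by simp
  next
    case (Suc j)
    then show ?thesis using a_ins by (auto intro!: a_ins')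
  qed
next
  case (a_match x z c a w')
  show ?case
  proof (cases i)
    case 0 then show ?thesis using align.a_ins[OF align.a_match[OF a_match.hyps]] by simp
  next
    case (Suc j)
    then show ?thesis using a_match by (auto intro!: a_match')
  qed
qed

lemma align_subst: "align x z c \<Longrightarrow> i < length z \<Longrightarrow>
    \<exists>c'. c' \<le> c + ed (z ! i) w \<and> align x (z[i := w]) c'"
proof (induction arbitrary: i rule: align.induct)
  case a_nil then show ?case by simp
next
  case (a_ins x z c w')
  show ?case
  proof (cases i)
    case 0 then show ?thesis using align.a_ins[OF a_ins.hyps(1), of w] ed_len1[where xs=w' and ys=w] by (intro exI[of _ "c + length w"]) auto
  next
    case (Suc j)
    then obtain c' where "c' \<le> c + ed (z ! j) w" "align x (z[j := w]) c'" using a_ins by auto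
    then show ?thesis using Suc by (intro exI[of _ "c' + length w'"]) (auto intro!: a_ins')
  qed
next
  case (a_match x z c a w')
  show ?case
  proof (cases i)
    case 0 then show ?thesis using align.a_match[OF a_match.hyps(1), of a w] ed_tri[of a w w'] by (intro exI[of _ "c + ed a w"]) auto
  next
    case (Suc j)
    then obtain c' where "c' \<le> c + ed (z ! j) w" "align x (z[j := w]) c'" using a_match by auto
    then show ?thesis using Suc by (intro exI[of _ "c' + ed a w'"]) (auto intro!: a_match')
  qed
qed

lemma reach_align: "aed_reach x z c \<Longrightarrow> \<exists>c'. c' \<le> c \<and> align x z c'"
proof (induction rule: aed_reach.induct)
  case (refl x) then show ?case using align_refl by blast
next
  case (ins x z c i w)
  then obtain c' where "c' \<le> c" "align x z c'" by blast
  then show ?case using align_ins_at[of x z c' i w] ins by (intro exI[of _ "c' + length w"]) auto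
next
  case (subst x z c i w)
  then obtain c' where "c' \<le> c" "align x z c'" by blast
  then obtain c'' where "c'' \<le> c' + ed (z ! i) w" "align x (z[i := w]) c''"
    using align_subst[of x z c' i w] subst by blast
  then show ?case using \<open>c' \<le> c\<close> by (intro exI[of _ c'']) auto
qed

lemma reach_lift: "aed_reach x z c \<Longrightarrow> aed_reach (a # x) (a # z) c"
proof (induction rule: aed_reach.induct)
  case (refl x) then show ?case by (rule aed_reach.refl)
next
  case (ins x z c i w)
  then show ?case using aed_reach.ins[OF ins.IH, of "Suc i" w] by simp
next
  case (subst x z c i w)
  then show ?case using aed_reach.subst[OF subst.IH, of "Suc i" w] by simp
qed

lemma align_reach: "align x z c \<Longrightarrow> aed_reach x z c"
proof (induction rule: align.induct)
  case a_nil then show ?case by (rule aed_reach.refl)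
next
  case (a_ins x z c w)
  then show ?case using aed_reach.ins[OF a_ins.IH, where i=0 and w=w] by simp
next
  case (a_match x z c a w)
  then show ?case using aed_reach.subst[OF reach_lift[OF a_match.IH], where i=0 and w=w] by simp
qed

lemma aed_le: "align x z c \<Longrightarrow> aed x z \<le> c"
  unfolding aed_def by (rule Least_le) (rule align_reach)

lemma aed_align: "length x \<le> length z \<Longrightarrow> \<exists>c. c \<le> aed x z \<and> align x z c"
proof -
  assume "length x \<le> length z"
  then obtain c where "align x z c" using align_exists by blast
  then have "aed_reach x z (aed x z)" unfolding aed_def by (rule LeastI[OF align_reach])
  then show ?thesis using reach_align by blast
qed



lemma ed_Nil1[simp]: "ed [] ys = length ys" by simp

lemma edg_Nil2[simp]: "edg lam xs [] = lam * real (length xs)"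
  by (cases xs) auto
lemma edg_Nil1[simp]: "edg lam [] ys = lam * real (length ys)"
  by (cases ys) auto

lemma edg_giveup: "lam \<ge> 0 \<Longrightarrow> edg lam xs ys \<le> lam * real (length xs) + lam * real (length ys)"
  by (cases xs; cases ys) auto

lemma edg_del: "lam \<ge> 0 \<Longrightarrow> edg lam (a # xs) ys \<le> edg lam xs ys + lam + real (length a)"
  by (cases ys) (auto simp: algebra_simps)

lemma edg_ins: "lam \<ge> 0 \<Longrightarrow> edg lam xs (b # ys) \<le> edg lam xs ys + lam + real (length b)"
  by (cases xs) (auto simp: algebra_simps)

lemma edg_sub: "edg lam (a # xs) (b # ys) \<le> edg lam xs ys + lam + real (ed a b)"
  by simp

lemma align_Cons_cases: "align x (w # z) c \<Longrightarrow>
   (\<exists>c'. align x z c' \<and> c = c' + length w) \<or> (\<exists>a x' c'. x = a # x' \<and> align x' z c' \<and> c = c' + ed a w)"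
  by (erule align.cases) auto

lemma lower:
  assumes lam: "lam \<ge> 0"
  shows "take k P = take k Q \<Longrightarrow> k \<le> length P \<Longrightarrow> k \<le> length Q \<Longrightarrow>
    align x P c1 \<Longrightarrow> align y Q c2 \<Longrightarrow>
    edg lam x y \<le> real c1 + real c2 + lam * (real (length P) + real (length Q) - real k)"
proof (induction k arbitrary: x y P Q c1 c2)
  case 0
  have "edg lam x y \<le> lam * real (length x) + lam * real (length y)" by (rule edg_giveup[OF lam])
  also have "\<dots> \<le> lam * real (length P) + lam * real (length Q)"
    using align_len[OF "0.prems"(4)] align_len[OF "0.prems"(5)] lam
    by (intro add_mono mult_left_mono) auto
  finally show ?case by (simp add: algebra_simps)
next
  case (Suc k)
  from Suc.prems obtain w P' Q' where PQ: "P = w # P'" "Q = w # Q'" "take k P' = take k Q'"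
    "k \<le> length P'" "k \<le> length Q'"
    by (cases P; cases Q) auto
  have ih: "\<And>x y c1 c2. align x P' c1 \<Longrightarrow> align y Q' c2 \<Longrightarrow>
    edg lam x y \<le> real c1 + real c2 + lam * (real (length P') + real (length Q') - real k)"
    using Suc.IH PQ by blast
  have goal_eq: "lam * (real (length P) + real (length Q) - real (Suc k)) =
      lam * (real (length P') + real (length Q') - real k) + lam"
    using PQ by (simp add: algebra_simps)
  have tri: "real (ed a b) \<le> real (ed a w) + real (ed b w)" for a b
    using ed_tri[of a b w] ed_sym[of b w] by simp
  have l1: "real (length a) \<le> real (ed a w) + real (length w)" for a
    using ed_len2[of a w] by simp
  consider (ii) c1' c2' where "align x P' c1'" "c1 = c1' + length w" "align y Q' c2'" "c2 = c2' + length w"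
    | (im) c1' y' b c2' where "align x P' c1'" "c1 = c1' + length w" "y = b # y'" "align y' Q' c2'" "c2 = c2' + ed b w"
    | (mi) x' a c1' c2' where "x = a # x'" "align x' P' c1'" "c1 = c1' + ed a w" "align y Q' c2'" "c2 = c2' + length w"
    | (mm) x' a c1' y' b c2' where "x = a # x'" "align x' P' c1'" "c1 = c1' + ed a w" "y = b # y'" "align y' Q' c2'" "c2 = c2' + ed b w"
    using align_Cons_cases[OF Suc.prems(4)[unfolded PQ]] align_Cons_cases[OF Suc.prems(5)[unfolded PQ]]
    by metis
  then show ?case
  proof cases
    case ii
    show ?thesis using ih[OF ii(1) ii(3)] ii lam goal_eq by simp
  next
    case im
    show ?thesis using ih[OF im(1) im(4)] im lam goal_eq edg_ins[OF lam, of x b y'] l1[of b]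
      by simp
  next
    case mi
    show ?thesis using ih[OF mi(2) mi(4)] mi lam goal_eq edg_del[OF lam, of a x' y] l1[of a]
      by simp
  next
    case mm
    show ?thesis using ih[OF mm(2) mm(5)] mm lam goal_eq edg_sub[of lam a x' b y'] tri[of a b]
      by simp
  qed
qed



declare tree_path.simps[simp del]

function npath :: "(nat \<times> 'a list) list \<Rightarrow> nat \<Rightarrow> nat list" where
  "npath ns v =
     (if v = 0 \<or> length ns < v \<or> v \<le> fst (ns ! (v - 1)) then []
      else npath ns (fst (ns ! (v - 1))) @ [v])"
  by pat_completeness auto
termination by (relation "measure (\<lambda>(ns, v). v)") auto

declare npath.simps[simp del]

lemma tp_npath: "tree_path ns v = map (\<lambda>u. snd (ns ! (u - 1))) (npath ns v)"
proof (induction ns v rule: npath.induct)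
  case (1 ns v)
  show ?case
    using 1 by (subst tree_path.simps, subst npath.simps) auto
qed

lemma npath_range: "u \<in> set (npath ns v) \<Longrightarrow> 1 \<le> u \<and> u \<le> v \<and> u \<le> length ns"
proof (induction ns v rule: npath.induct)
  case (1 ns v)
  show ?case
    using 1 by (subst (asm) npath.simps) (auto split: if_splits)
qed

lemma npath_distinct: "distinct (npath ns v)"
proof (induction ns v rule: npath.induct)
  case (1 ns v)
  show ?case
    using 1 npath_range[of v ns "fst (ns ! (v - 1))"] by (subst npath.simps) auto
qed

lemma npath_prefix: "u \<in> set (npath ns v) \<Longrightarrow> prefix (npath ns u) (npath ns v)"
proof (induction ns v rule: npath.induct)
  case (1 ns v)
  show ?case
  proof (cases "v = 0 \<or> length ns < v \<or> v \<le> fst (ns ! (v - 1))")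
    case True
    then show ?thesis using 1(2) by (subst (asm) npath.simps) simp
  next
    case False
    then have e: "npath ns v = npath ns (fst (ns ! (v - 1))) @ [v]" by (subst npath.simps) simp
    show ?thesis
    proof (cases "u = v")
      case True then show ?thesis by simp
    next
      case uv: False
      then have "u \<in> set (npath ns (fst (ns ! (v - 1))))" using 1(2) e by simp
      then have "prefix (npath ns u) (npath ns (fst (ns ! (v - 1))))" using 1(1) False by blast
      then show ?thesis unfolding e by (simp add: prefix_def) (metis append.assoc)
    qed
  qed
qed

lemma npath_self: "valid_tree ns \<Longrightarrow> 1 \<le> v \<Longrightarrow> v \<le> length ns \<Longrightarrow> v \<in> set (npath ns v)"
  unfolding valid_tree_def by (subst npath.simps) (auto dest!: spec[of _ "v - 1"])

lemma tree_common:
  assumes "valid_tree ns"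
  shows "\<exists>k. k \<le> length (tree_path ns vx) \<and> k \<le> length (tree_path ns vy) \<and>
     take k (tree_path ns vx) = take k (tree_path ns vy) \<and>
     length (tree_path ns vx) + length (tree_path ns vy) \<le> length ns + k"
proof -
  define A where "A = npath ns vx"
  define B where "B = npath ns vy"
  define L where "L = longest_common_prefix A B"
  define f where "f = (\<lambda>u. snd (ns ! (u - 1)))"
  have pA: "prefix L A" and pB: "prefix L B"
    unfolding L_def by (rule longest_common_prefix_prefix1, rule longest_common_prefix_prefix2)
  have sub: "set A \<inter> set B \<subseteq> set L"
  proof
    fix s assume s: "s \<in> set A \<inter> set B"
    then have r: "1 \<le> s" "s \<le> length ns" using npath_range unfolding A_def by blast+
    have "prefix (npath ns s) A" "prefix (npath ns s) B"
      using s npath_prefix unfolding A_def B_def by blast+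
    then have "prefix (npath ns s) L" unfolding L_def by (rule longest_common_prefix_max_prefix)
    moreover have "s \<in> set (npath ns s)" by (rule npath_self[OF assms r])
    ultimately show "s \<in> set L" using set_mono_prefix by blast
  qed
  have dA: "distinct A" and dB: "distinct B" unfolding A_def B_def by (rule npath_distinct)+
  have dL: "distinct L" using pA dA by (auto simp: prefix_def)
  have un: "set A \<union> set B \<subseteq> {1..length ns}"
    using npath_range unfolding A_def B_def by fastforce
  have "card (set A \<union> set B) \<le> length ns"
    using card_mono[OF _ un] by simp
  moreover have "card (set A \<union> set B) + card (set A \<inter> set B) = card (set A) + card (set B)"
    using card_Un_Int[of "set A" "set B"] by simp
  moreover have "card (set A \<inter> set B) \<le> length L"
    using card_mono[OF _ sub] dL distinct_card by fastforce
  ultimately have len: "length A + length B \<le> length ns + length L"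
    using distinct_card[OF dA] distinct_card[OF dB] by linarith
  have tk: "take (length L) A = L" "take (length L) B = L"
    using pA pB by (auto simp: prefix_def)
  have lL: "length L \<le> length A" "length L \<le> length B"
    using pA pB prefix_length_le by blast+
  have tp: "tree_path ns vx = map f A" "tree_path ns vy = map f B"
    unfolding A_def B_def f_def by (rule tp_npath)+
  show ?thesis
    by (rule exI[of _ "length L"]) (simp add: tp take_map tk lL len)
qed



lemma tp0[simp]: "tree_path ns 0 = []"
  by (subst tree_path.simps) simp

lemma valid_shift: assumes "valid_tree ns" shows "valid_tree (shift_under s ns)"
  unfolding valid_tree_def
proof (intro allI impI)
  fix k assume k: "k < length (shift_under s ns)"
  show "fst (shift_under s ns ! k) \<le> k"
  proof (cases k)
    case 0 then show ?thesis by (simp add: shift_under_def)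
  next
    case (Suc j)
    then have "j < length ns" using k by (simp add: shift_under_def)
    then have "fst (ns ! j) \<le> j" using assms unfolding valid_tree_def by blast
    then show ?thesis using Suc \<open>j < length ns\<close> by (simp add: shift_under_def case_prod_beta)
  qed
qed

lemma tp_shift: "valid_tree ns \<Longrightarrow> v \<le> length ns \<Longrightarrow>
    tree_path (shift_under s ns) (Suc v) = s # tree_path ns v"
proof (induction v rule: less_induct)
  case (less v)
  show ?case
  proof (cases v)
    case 0
    then show ?thesis by (subst tree_path.simps) (simp add: shift_under_def)
  next
    case (Suc j)
    obtain p l where e: "ns ! j = (p, l)" by fastforce
    have "j < length ns" using less.prems Suc by simp
    then have "fst (ns ! j) \<le> j" using less.prems(1) unfolding valid_tree_def by blast
    then have pj: "p \<le> j" using e by simp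
    have ns': "shift_under s ns ! v = (Suc p, l)"
      using e Suc less.prems by (simp add: shift_under_def)
    have "tree_path (shift_under s ns) (Suc v) = tree_path (shift_under s ns) (Suc p) @ [l]"
      using ns' pj Suc less.prems by (subst tree_path.simps) (simp add: shift_under_def)
    also have "\<dots> = s # tree_path ns p @ [l]"
      using less.IH[of p] pj Suc less.prems by simp
    also have "tree_path ns v = tree_path ns p @ [l]"
      using e pj Suc less.prems by (subst tree_path.simps) simp
    ultimately show ?thesis by simp
  qed
qed

lemma len_shift[simp]: "length (shift_under s ns) = Suc (length ns)"
  by (simp add: shift_under_def)

definition NS where "NS xs ys = chain 0 0 xs @ chain 0 (length xs) ys"

lemma NS_nth1: "i < length xs \<Longrightarrow> NS xs ys ! i = (if i = 0 then 0 else i, xs ! i)"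
  by (simp add: NS_def chain_def nth_append)

lemma NS_nth2: "j < length ys \<Longrightarrow> NS xs ys ! (length xs + j) = (if j = 0 then 0 else length xs + j, ys ! j)"
  by (simp add: NS_def chain_def nth_append)

lemma NS_len[simp]: "length (NS xs ys) = length xs + length ys"
  by (simp add: NS_def chain_def)

lemma NS_valid: "valid_tree (NS xs ys)"
  unfolding valid_tree_def
proof (intro allI impI)
  fix k assume k: "k < length (NS xs ys)"
  show "fst (NS xs ys ! k) \<le> k"
  proof (cases "k < length xs")
    case True then show ?thesis by (simp add: NS_nth1)
  next
    case False
    then obtain j where "k = length xs + j" "j < length ys" using k
      by (metis NS_len add_diff_inverse_nat nat_add_left_cancel_less)
    then show ?thesis by (simp add: NS_nth2)
  qed
qed

lemma NS_tp1: "i < length xs \<Longrightarrow> tree_path (NS xs ys) (Suc i) = take (Suc i) xs"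
proof (induction i)
  case 0
  then show ?case by (subst tree_path.simps) (simp add: NS_nth1 take_Suc_conv_app_nth)
next
  case (Suc i)
  have "tree_path (NS xs ys) (Suc (Suc i)) = tree_path (NS xs ys) (Suc i) @ [xs ! Suc i]"
    using Suc.prems by (subst tree_path.simps) (simp add: NS_nth1)
  then show ?case using Suc by (simp add: take_Suc_conv_app_nth)
qed

lemma NS_tp2: "j < length ys \<Longrightarrow> tree_path (NS xs ys) (length xs + Suc j) = take (Suc j) ys"
proof (induction j)
  case 0
  then show ?case
    by (subst tree_path.simps) (simp add: NS_nth2[where j=0, simplified] take_Suc_conv_app_nth)
next
  case (Suc j)
  have "tree_path (NS xs ys) (length xs + Suc (Suc j)) = tree_path (NS xs ys) (length xs + Suc j) @ [ys ! Suc j]"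
    using Suc.prems NS_nth2[of "Suc j" ys xs] by (subst tree_path.simps) simp
  then show ?case using Suc by (simp add: take_Suc_conv_app_nth)
qed

lemma bb_inv: "bb lam x y ns vx vy \<Longrightarrow> lam \<ge> 0 \<Longrightarrow>
  valid_tree ns \<and> vx \<le> length ns \<and> vy \<le> length ns \<and>
  (\<exists>c1 c2. align x (tree_path ns vx) c1 \<and> align y (tree_path ns vy) c2 \<and>
     real c1 + real c2 + lam * real (length ns) \<le> edg lam x y)"
proof (induction rule: bb.induct)
  case empty
  then show ?case by (auto simp: valid_tree_def intro!: exI[of _ 0] a_nil)
next
  case (insertion xs ys ns vx vy b)
  then obtain c1 c2 where h: "valid_tree ns" "vx \<le> length ns" "vy \<le> length ns"
    "align xs (tree_path ns vx) c1" "align ys (tree_path ns vy) c2"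
    "real c1 + real c2 + lam * real (length ns) \<le> edg lam xs ys" by blast
  have Y: "align (b # ys) (tree_path (shift_under b ns) (vy + 1)) c2"
    using tp_shift[OF h(1) h(3)] a_match'[OF h(5), of c2 b b] by simp
  show ?case
  proof (cases "xs = []")
    case True
    have "real 0 + real c2 + lam * real (length (shift_under b ns)) \<le> edg lam xs (b # ys)"
      using h(6) True insertion.prems by (simp add: algebra_simps)
    then show ?thesis using True Y valid_shift[OF h(1)] h
      by (intro conjI exI[of _ 0] exI[of _ c2]) (auto intro: a_nil)
  next
    case False
    have X: "align xs (tree_path (shift_under b ns) (vx + 1)) (c1 + length b)"
      using tp_shift[OF h(1) h(2)] a_ins[OF h(4), of b] by simp
    have "real (c1 + length b) + real c2 + lam * real (length (shift_under b ns)) \<le> edg lam xs (b # ys)"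
      using h(6) False insertion.hyps(2) by (simp add: algebra_simps)
    then show ?thesis using False X Y valid_shift[OF h(1)] h
      by (intro conjI exI[of _ "c1 + length b"] exI[of _ c2]) auto
  qed
next
  case (deletion xs ys ns vx vy a)
  then obtain c1 c2 where h: "valid_tree ns" "vx \<le> length ns" "vy \<le> length ns"
    "align xs (tree_path ns vx) c1" "align ys (tree_path ns vy) c2"
    "real c1 + real c2 + lam * real (length ns) \<le> edg lam xs ys" by blast
  have X: "align (a # xs) (tree_path (shift_under a ns) (vx + 1)) c1"
    using tp_shift[OF h(1) h(2)] a_match'[OF h(4), of c1 a a] by simp
  show ?case
  proof (cases "ys = []")
    case True
    have "real c1 + real 0 + lam * real (length (shift_under a ns)) \<le> edg lam (a # xs) ys"
      using h(6) True deletion.prems by (simp add: algebra_simps)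
    then show ?thesis using True X valid_shift[OF h(1)] h
      by (intro conjI exI[of _ c1] exI[of _ 0]) (auto intro: a_nil)
  next
    case False
    have Y: "align ys (tree_path (shift_under a ns) (vy + 1)) (c2 + length a)"
      using tp_shift[OF h(1) h(3)] a_ins[OF h(5), of a] by simp
    have "real c1 + real (c2 + length a) + lam * real (length (shift_under a ns)) \<le> edg lam (a # xs) ys"
      using h(6) False deletion.hyps(2) by (simp add: algebra_simps)
    then show ?thesis using False X Y valid_shift[OF h(1)] h
      by (intro conjI exI[of _ c1] exI[of _ "c2 + length a"]) auto
  qed
next
  case (substitution xs ys ns vx vy a b)
  then obtain c1 c2 where h: "valid_tree ns" "vx \<le> length ns" "vy \<le> length ns"
    "align xs (tree_path ns vx) c1" "align ys (tree_path ns vy) c2"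
    "real c1 + real c2 + lam * real (length ns) \<le> edg lam xs ys" by blast
  have X: "align (a # xs) (tree_path (shift_under a ns) (vx + 1)) c1"
    using tp_shift[OF h(1) h(2)] a_match'[OF h(4), of c1 a a] by simp
  have Y: "align (b # ys) (tree_path (shift_under a ns) (vy + 1)) (c2 + ed a b)"
    using tp_shift[OF h(1) h(3)] a_match[OF h(5), of b a] ed_sym[of a b] by simp
  have "real c1 + real (c2 + ed a b) + lam * real (length (shift_under a ns)) \<le> edg lam (a # xs) (b # ys)"
    unfolding substitution.hyps(2) using h(6) by (simp add: algebra_simps)
  then show ?case using X Y valid_shift[OF h(1)] h
    by (intro conjI exI[of _ c1] exI[of _ "c2 + ed a b"]) auto
next
  case (giveup xs ys)
  have e: "chain 0 0 xs @ chain 0 (length xs) ys = NS xs ys" by (simp add: NS_def)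
  have p1: "tree_path (NS xs ys) (length xs) = xs"
    using NS_tp1[of "length xs - 1" xs ys] giveup.hyps(1) by simp
  have p2: "tree_path (NS xs ys) (length xs + length ys) = ys"
    using NS_tp2[of "length ys - 1" ys xs] giveup.hyps(2) by simp
  show ?case unfolding e using p1 p2 NS_valid giveup.hyps(3)
    by (auto intro!: exI[of _ 0] align_refl simp: algebra_simps)
qed

lemma bb_x_nil: "\<exists>ns vx vy. bb lam xs [] ns vx vy"
proof (induction xs)
  case Nil then show ?case using bb.empty by blast
next
  case (Cons a xs)
  then obtain ns vx vy where "bb lam xs [] ns vx vy" by blast
  from bb.deletion[OF this, of a] show ?case by auto
qed

lemma bb_nil_y: "\<exists>ns vx vy. bb lam [] ys ns vx vy"
proof (induction ys)
  case Nil then show ?case using bb.empty by blast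
next
  case (Cons b ys)
  then obtain ns vx vy where "bb lam [] ys ns vx vy" by blast
  from bb.insertion[OF this, of b] show ?case by auto
qed

lemma bb_ex: "\<exists>ns vx vy. bb lam x y ns vx vy"
proof (induction lam x y rule: edg.induct)
  case (1 lam)
  then show ?case using bb.empty by blast
next
  case (2 lam v va)
  obtain ns vx vy where "bb lam va [] ns vx vy" using bb_x_nil by blast
  from bb.deletion[OF this, of v] show ?case by auto
next
  case (3 lam v va)
  obtain ns vx vy where "bb lam [] va ns vx vy" using bb_nil_y by blast
  from bb.insertion[OF this, of v] show ?case by auto
next
  case (4 lam a xs b ys)
  have "edg lam (a # xs) (b # ys) = edg lam xs ys + lam + real (ed a b) \<or>
        edg lam (a # xs) (b # ys) = edg lam (a # xs) ys + lam + real (ed [] b) \<or>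
        edg lam (a # xs) (b # ys) = edg lam xs (b # ys) + lam + real (ed a []) \<or>
        edg lam (a # xs) (b # ys) = lam * real (length (a # xs)) + lam * real (length (b # ys))"
    by (simp only: edg.simps(4)) linarith
  then show ?case
  proof (elim disjE)
    assume h: "edg lam (a # xs) (b # ys) = edg lam xs ys + lam + real (ed a b)"
    then show ?thesis using 4(1) bb.substitution[OF _ h] by blast
  next
    assume h: "edg lam (a # xs) (b # ys) = edg lam (a # xs) ys + lam + real (ed [] b)"
    obtain ns vx vy where "bb lam (a # xs) ys ns vx vy" using 4(2) by blast
    from bb.insertion[OF this, of b] h show ?thesis by blast
  next
    assume h: "edg lam (a # xs) (b # ys) = edg lam xs (b # ys) + lam + real (ed a [])"
    obtain ns vx vy where "bb lam xs (b # ys) ns vx vy" using 4(3) by blast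
    from bb.deletion[OF this, of a] h show ?thesis by blast
  next
    assume h: "edg lam (a # xs) (b # ys) = lam * real (length (a # xs)) + lam * real (length (b # ys))"
    from bb.giveup[of "a # xs" "b # ys", OF _ _ h] show ?thesis by blast
  qed
qed

lemma part1:
  assumes lam: "lam \<ge> 0" and st: "summary_tree x y ns vx vy"
  shows "edg lam x y \<le> error lam x y ns vx vy"
proof -
  define P where "P = tree_path ns vx"
  define Q where "Q = tree_path ns vy"
  have v: "valid_tree ns" "length x \<le> length P" "length y \<le> length Q"
    using st unfolding summary_tree_def P_def Q_def by auto
  obtain k where k: "k \<le> length P" "k \<le> length Q" "take k P = take k Q" "length P + length Q \<le> length ns + k"
    using tree_common[OF v(1)] unfolding P_def Q_def by blast
  obtain c1 where c1: "c1 \<le> aed x P" "align x P c1" using aed_align[OF v(2)] by blast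
  obtain c2 where c2: "c2 \<le> aed y Q" "align y Q c2" using aed_align[OF v(3)] by blast
  have "edg lam x y \<le> real c1 + real c2 + lam * (real (length P) + real (length Q) - real k)"
    by (rule lower[OF lam k(3) k(1) k(2) c1(2) c2(2)])
  also have "\<dots> \<le> real (aed x P) + real (aed y Q) + lam * real (length ns)"
  proof -
    have "real (length P) + real (length Q) - real k \<le> real (length ns)" using k(4) by linarith
    then have "lam * (real (length P) + real (length Q) - real k) \<le> lam * real (length ns)"
      using lam by (simp add: mult_left_mono)
    then show ?thesis using c1(1) c2(1) by linarith
  qed
  finally show ?thesis unfolding error_def P_def Q_def .
qed


theorem theorem4:
  fixes x y :: "'a::finite list list" and lam :: real
  assumes "lam \<ge> 0"
  shows "(\<forall>ns vx vy. summary_tree x y ns vx vy \<longrightarrow> edg lam x y \<le> error lam x y ns vx vy)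
       \<and> (\<exists>ns vx vy. bb lam x y ns vx vy)
       \<and> (\<forall>ns vx vy. bb lam x y ns vx vy \<longrightarrow>
            summary_tree x y ns vx vy \<and> error lam x y ns vx vy = edg lam x y)"
proof (intro conjI allI impI)
  fix ns vx vy assume "summary_tree x y ns vx vy"
  then show "edg lam x y \<le> error lam x y ns vx vy" by (rule part1[OF assms])
next
  show "\<exists>ns vx vy. bb lam x y ns vx vy" by (rule bb_ex)
next
  fix ns vx vy assume b: "bb lam x y ns vx vy"
  obtain c1 c2 where h: "valid_tree ns" "vx \<le> length ns" "vy \<le> length ns"
    "align x (tree_path ns vx) c1" "align y (tree_path ns vy) c2"
    "real c1 + real c2 + lam * real (length ns) \<le> edg lam x y"
    using bb_inv[OF b assms] by blast
  show st: "summary_tree x y ns vx vy"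
    unfolding summary_tree_def using h align_len by blast
  have "error lam x y ns vx vy \<le> edg lam x y"
    unfolding error_def using aed_le[OF h(4)] aed_le[OF h(5)] h(6) by linarith
  moreover have "edg lam x y \<le> error lam x y ns vx vy" by (rule part1[OF assms st])
  ultimately show "error lam x y ns vx vy = edg lam x y" by linarith
qed

end
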